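(* Let $N,\ell,k$ be integers with $1\le\ell<k\le N$, and let $\phi_k:S_{N,k}\to S_{N,k-\ell}$ be the truncation $\langle\pi(1),\dots,\pi(k)\rangle\mapsto\langle\pi(1),\dots,\pi(k-\ell)\rangle$. For every $\pi\in S_{N,k}$, the number of distinct subpermutations $\phi_k(\sigma)$, as $\sigma$ ranges over the neighbours of $\pi$ in $\mathcal U_{N,\ell,k}$, is at most $(2\ell+1)^k$.
   Context: $[N]=\{1,\dots,N\}$, $S_N$ is the set of permutations of $[N]$. For $\pi,\sigma\in S_N$, $\delta(\pi,\sigma)=\max_{i\in[N]}|\pi^{-1}(i)-\sigma^{-1}(i)|$. For $1\le k\le N$, $S_{N,k}$ is the set of injective maps $[k]\to[N]$; a permutation $\pi'\in S_N$ extends $\pi\in S_{N,k}$ if $\pi'(i)=\pi(i)$ for all $i\in[k]$. For $\pi,\sigma\in S_{N,k}$, $\delta(\pi,\sigma)=\min\{\delta(\pi',\sigma'):\pi',\sigma'\in S_N$ extending $\pi,\sigma$ respectively$\}$. The $k$-restricted uncertainty graph $\mathcal U_{N,\ell,k}$ has vertex set $S_{N,k}$, with $\pi\sim\sigma$ iff $\pi(1)\ne\sigma(1)$ and $\delta(\pi,\sigma)\le\ell$. *)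

theory Defs
  imports Main
begin

text \<open>Encoding: a permutation of [N] (or an injective map [k] -> [N]) is the list
  [pi(1), ..., pi(k)] of its values; so pi(i) = xs ! (i - 1).\<close>

definition perms :: "nat \<Rightarrow> nat list set" where
  "perms N = {xs. length xs = N \<and> distinct xs \<and> set xs = {1..N}}"

definition partial_perms :: "nat \<Rightarrow> nat \<Rightarrow> nat list set" where
  "partial_perms N k = {xs. length xs = k \<and> distinct xs \<and> set xs \<subseteq> {1..N}}"

definition pinv :: "nat list \<Rightarrow> nat \<Rightarrow> nat" where
  "pinv xs i = (THE j. 1 \<le> j \<and> j \<le> length xs \<and> xs ! (j - 1) = i)"

definition perm_delta :: "nat \<Rightarrow> nat list \<Rightarrow> nat list \<Rightarrow> nat" where
  "perm_delta N p s = Max ((\<lambda>i. nat \<bar>int (pinv p i) - int (pinv s i)\<bar>) ` {1..N})"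

definition extends :: "nat list \<Rightarrow> nat list \<Rightarrow> bool" where
  "extends p' p \<longleftrightarrow> take (length p) p' = p"

definition partial_delta :: "nat \<Rightarrow> nat list \<Rightarrow> nat list \<Rightarrow> nat" where
  "partial_delta N p s = Min {perm_delta N p' s' | p' s'.
      p' \<in> perms N \<and> s' \<in> perms N \<and> extends p' p \<and> extends s' s}"

definition uadj :: "nat \<Rightarrow> nat \<Rightarrow> nat \<Rightarrow> nat list \<Rightarrow> nat list \<Rightarrow> bool" where
  "uadj N l k p s \<longleftrightarrow> p \<in> partial_perms N k \<and> s \<in> partial_perms N k
      \<and> p ! 0 \<noteq> s ! 0 \<and> partial_delta N p s \<le> l"

definition trunc :: "nat \<Rightarrow> nat \<Rightarrow> nat list \<Rightarrow> nat list" where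
  "trunc k l p = take (k - l) p"

end

theory Submission
  imports Defs
begin

lemma pinv_nth: "distinct xs \<Longrightarrow> j < length xs \<Longrightarrow> pinv xs (xs!j) = Suc j"
  unfolding pinv_def
proof (rule the_equality)
  assume "distinct xs" "j < length xs"
  then show "1 \<le> Suc j \<and> Suc j \<le> length xs \<and> xs ! (Suc j - 1) = xs ! j" by auto
next
  fix j' assume d: "distinct xs" "j < length xs" and h: "1 \<le> j' \<and> j' \<le> length xs \<and> xs ! (j' - 1) = xs ! j"
  then have "j' - 1 = j" using nth_eq_iff_index_eq[of xs "j'-1" j] by auto
  with h show "j' = Suc j" by auto
qed

lemma ext_exists:
  assumes "p \<in> partial_perms N k" "k \<le> N"
  shows "\<exists>p'. p' \<in> perms N \<and> extends p' p"
proof -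
  define r where "r = sorted_list_of_set ({1..N} - set p)"
  have p: "length p = k" "distinct p" "set p \<subseteq> {1..N}" using assms(1) by (auto simp: partial_perms_def)
  have sr: "set r = {1..N} - set p" "distinct r" by (auto simp: r_def)
  have "length r = card ({1..N} - set p)" using sr distinct_card by metis
  also have "\<dots> = N - k" using p by (simp add: card_Diff_subset distinct_card)
  finally have lr: "length r = N - k" .
  have "p @ r \<in> perms N" using p sr lr assms(2) by (auto simp: perms_def)
  moreover have "extends (p @ r) p" by (simp add: extends_def)
  ultimately show ?thesis by blast
qed

lemma finite_perms: "finite (perms N)"
proof -
  have "perms N \<subseteq> {xs. set xs \<subseteq> {1..N} \<and> length xs = N}" by (auto simp: perms_def)
  thus ?thesis using finite_lists_length_eq[of "{1..N}" N] finite_subset by auto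
qed

lemma key:
  assumes "uadj N l k p s" "i < k - l" "l < k" "k \<le> N"
  shows "\<exists>j<k. p!j = s!i \<and> j \<le> i+l \<and> i \<le> j+l"
proof -
  have pp: "p \<in> partial_perms N k" "s \<in> partial_perms N k" and le: "partial_delta N p s \<le> l"
    using assms(1) by (auto simp: uadj_def)
  define S where "S = {perm_delta N p' s' | p' s'.
      p' \<in> perms N \<and> s' \<in> perms N \<and> extends p' p \<and> extends s' s}"
  have "S \<subseteq> (\<lambda>(a,b). perm_delta N a b) ` (perms N \<times> perms N)" by (auto simp: S_def)
  hence fin: "finite S" using finite_perms finite_subset by blast
  obtain p0 s0 where "p0 \<in> perms N" "extends p0 p" "s0 \<in> perms N" "extends s0 s"
    using ext_exists[OF pp(1) assms(4)] ext_exists[OF pp(2) assms(4)] by blast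
  hence "S \<noteq> {}" by (auto simp: S_def)
  hence "Min S \<in> S" using fin by simp
  then obtain p' s' where ps: "p' \<in> perms N" "s' \<in> perms N" "extends p' p" "extends s' s"
    and dl: "perm_delta N p' s' \<le> l"
    using le unfolding S_def partial_delta_def by auto
  have lp: "length p = k" "length s = k" using pp by (auto simp: partial_perms_def)
  have ik: "i < k" using assms by simp
  have tp: "take k p' = p" "take k s' = s" using ps lp by (auto simp: extends_def)
  have lp': "length p' = N" "length s' = N" "distinct p'" "distinct s'" "set p' = {1..N}" "set s' = {1..N}"
    using ps by (auto simp: perms_def)
  have sv: "s!i = s'!i" using tp(2) ik by (metis nth_take)
  have iN: "i < N" using ik assms by simp
  have vin: "s!i \<in> {1..N}" using sv lp' iN by (metis nth_mem)
  then obtain j where j: "j < N" "p'!j = s!i" using lp' by (metis in_set_conv_nth)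
  have pi1: "pinv p' (s!i) = Suc j" using pinv_nth[of p' j] j lp' by simp
  have pi2: "pinv s' (s!i) = Suc i" using pinv_nth[of s' i] sv iN lp' by simp
  have "nat \<bar>int (pinv p' (s!i)) - int (pinv s' (s!i))\<bar>
        \<le> Max ((\<lambda>i. nat \<bar>int (pinv p' i) - int (pinv s' i)\<bar>) ` {1..N})"
    using vin by (intro Max_ge) auto
  hence "nat \<bar>int (Suc j) - int (Suc i)\<bar> \<le> l" using dl pi1 pi2 by (simp add: perm_delta_def)
  hence jb: "j \<le> i + l" "i \<le> j + l" by auto
  hence jk: "j < k" using assms by simp
  have "p!j = p'!j" using tp(1) jk by (metis nth_take)
  thus ?thesis using jk jb j by auto
qed

theorem mainTheorem7:
  fixes N l k :: nat
  assumes "1 \<le> l" and "l < k" and "k \<le> N"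
    and "p \<in> partial_perms N k"
  shows "card (trunc k l ` {s. uadj N l k p s}) \<le> (2 * l + 1) ^ k"
proof -
  define m where "m = k - l"
  define D where "D = {ds. set ds \<subseteq> {0..<2*l+1} \<and> length ds = m}"
  define f where "f ds = map (\<lambda>i. p ! (i + ds!i - l)) [0..<m]" for ds :: "nat list"
  have finD: "finite D" unfolding D_def using finite_lists_length_eq by blast
  have cD: "card D = (2*l+1)^m" unfolding D_def using card_lists_length_eq[of "{0..<2*l+1}" m] by simp
  have sub: "trunc k l ` {s. uadj N l k p s} \<subseteq> f ` D"
  proof
    fix t assume "t \<in> trunc k l ` {s. uadj N l k p s}"
    then obtain s where us: "uadj N l k p s" and t: "t = take m s" by (auto simp: trunc_def m_def)
    have ls: "length s = k" using us by (auto simp: uadj_def partial_perms_def)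
    define J where "J i = (SOME j. j<k \<and> p!j = s!i \<and> j \<le> i+l \<and> i \<le> j+l)" for i
    have J: "J i < k \<and> p!(J i) = s!i \<and> J i \<le> i+l \<and> i \<le> J i+l" if "i < m" for i
    proof -
      have "\<exists>j. j<k \<and> p!j = s!i \<and> j \<le> i+l \<and> i \<le> j+l"
        using key[OF us _ assms(2,3), of i] that m_def by auto
      thus ?thesis unfolding J_def by (rule someI_ex)
    qed
    define ds where "ds = map (\<lambda>i. J i + l - i) [0..<m]"
    have "ds \<in> D" unfolding D_def ds_def
    proof (safe)
      fix x assume "x \<in> set (map (\<lambda>i. J i + l - i) [0..<m])"
      then obtain i where "i < m" "x = J i + l - i" by auto
      thus "x \<in> {0..<2*l+1}" using J[of i] by auto
    qed simp
    moreover have "f ds = t"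
    proof (rule nth_equalityI)
      show "length (f ds) = length t" using ls m_def t unfolding f_def by simp
      fix i assume "i < length (f ds)"
      hence i: "i < m" unfolding f_def by simp
      have "f ds ! i = p ! (i + (J i + l - i) - l)" unfolding f_def ds_def using i by simp
      also have "i + (J i + l - i) - l = J i" using J[OF i] by simp
      finally show "f ds ! i = t ! i" using J[OF i] i t by simp
    qed
    ultimately show "t \<in> f ` D" by blast
  qed
  have "card (trunc k l ` {s. uadj N l k p s}) \<le> card (f ` D)"
    using sub finD by (intro card_mono) auto
  also have "\<dots> \<le> card D" using finD by (rule card_image_le)
  also have "\<dots> \<le> (2*l+1)^k" unfolding cD m_def by (rule power_increasing) auto
  finally show ?thesis .
qed

end
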